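(* Consider the following process on a finite vertex set $V=\{1,\dots,p\}$. One maintains an ordered list of vertex subsets ("cliques") $[C_1,\dots,C_m]$ and a set of outstanding vertices $O=V\setminus\bigcup_i C_i$; the associated graph $G$ on $V$ has an edge between two distinct vertices iff they lie in a common $C_i$. Initially the list is some list $C_I=[C_1,\dots,C_m]$ of nonempty subsets that is a perfect sequence of sets in the graph it induces (for instance a single nonempty subset). While $O\neq\emptyset$, a step chooses a clique $C_a$ in the list, a vertex $v\in O$ and a subset $S\subseteq C_a$, and then: if $S$ is a nonempty proper subset of $C_a$, the clique $S\cup\{v\}$ is appended at the end of the list; if $S=C_a$, the entry $C_a$ is replaced in place by $C_a\cup\{v\}$; if $S=\emptyset$, the clique $\{v\}$ is appended at the end of the list; finally $v$ is removed from $O$. (In the MFCF algorithm the triple $(C_a,v,S)$ is chosen by maximising a gain function, but the claim concerns any such choices.) Then at every stage, and in particular at termination, the ordered list of cliques is a perfect sequence of sets.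
   Context: An ordering $[C_1,\dots,C_m]$ of subsets has the running intersection property if for every $i$ with $2\le i\le m$ there is $j<i$ with $C_i\cap(C_1\cup\dots\cup C_{i-1})\subseteq C_j$; the sets $S_i=C_i\cap(C_1\cup\dots\cup C_{i-1})$ are the separators. The ordering is a perfect sequence of sets (perfect order) if it has the running intersection property and every separator $S_i$ is complete (all pairs of its vertices are adjacent) in the graph $G$. *)

theory Defs
  imports Main
begin

definition clique_graph :: "'a set list \<Rightarrow> 'a \<Rightarrow> 'a \<Rightarrow> bool" where
  "clique_graph Cs x y \<longleftrightarrow> x \<noteq> y \<and> (\<exists>C \<in> set Cs. x \<in> C \<and> y \<in> C)"

text \<open>Separator S_i = C_i \<inter> (C_1 \<union> ... \<union> C_{i-1}) (0-based index i).\<close>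
definition separator :: "'a set list \<Rightarrow> nat \<Rightarrow> 'a set" where
  "separator Cs i = Cs ! i \<inter> \<Union> (set (take i Cs))"

definition running_intersection :: "'a set list \<Rightarrow> bool" where
  "running_intersection Cs \<longleftrightarrow>
     (\<forall>i. 1 \<le> i \<and> i < length Cs \<longrightarrow> (\<exists>j < i. separator Cs i \<subseteq> Cs ! j))"

definition complete_in :: "('a \<Rightarrow> 'a \<Rightarrow> bool) \<Rightarrow> 'a set \<Rightarrow> bool" where
  "complete_in G S \<longleftrightarrow> (\<forall>x \<in> S. \<forall>y \<in> S. x \<noteq> y \<longrightarrow> G x y)"

definition perfect_sequence :: "('a \<Rightarrow> 'a \<Rightarrow> bool) \<Rightarrow> 'a set list \<Rightarrow> bool" where
  "perfect_sequence G Cs \<longleftrightarrow> running_intersection Cs \<and>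
     (\<forall>i. 1 \<le> i \<and> i < length Cs \<longrightarrow> complete_in G (separator Cs i))"

inductive mfcf_reach :: "nat \<Rightarrow> nat set list \<Rightarrow> nat set \<Rightarrow> bool" for p :: nat where
  init: "\<lbrakk> Cs \<noteq> []; \<forall>C \<in> set Cs. C \<noteq> {} \<and> C \<subseteq> {1..p};
          perfect_sequence (clique_graph Cs) Cs \<rbrakk>
        \<Longrightarrow> mfcf_reach p Cs ({1..p} - \<Union> (set Cs))"
| step_proper: "\<lbrakk> mfcf_reach p Cs Out; Out \<noteq> {}; a < length Cs; v \<in> Out;
          S \<subseteq> Cs ! a; S \<noteq> {}; S \<noteq> Cs ! a \<rbrakk>
        \<Longrightarrow> mfcf_reach p (Cs @ [insert v S]) (Out - {v})"
| step_full: "\<lbrakk> mfcf_reach p Cs Out; Out \<noteq> {}; a < length Cs; v \<in> Out \<rbrakk>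
        \<Longrightarrow> mfcf_reach p (Cs[a := insert v (Cs ! a)]) (Out - {v})"
| step_empty: "\<lbrakk> mfcf_reach p Cs Out; Out \<noteq> {}; a < length Cs; v \<in> Out \<rbrakk>
        \<Longrightarrow> mfcf_reach p (Cs @ [{v}]) (Out - {v})"

end

theory Submission
  imports Defs
begin

lemma mem_Union_set:
  "x \<in> \<Union> (set xs) \<longleftrightarrow> (\<exists>k < length xs. x \<in> xs ! k)"
proof
  assume "x \<in> \<Union> (set xs)"
  then show "\<exists>k < length xs. x \<in> xs ! k" by (auto simp: in_set_conv_nth)
next
  assume "\<exists>k < length xs. x \<in> xs ! k"
  then obtain k where "k < length xs" "x \<in> xs ! k" by blast
  then show "x \<in> \<Union> (set xs)" using nth_mem by blast
qed

lemma mem_Union_take: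
  "x \<in> \<Union> (set (take i xs)) \<longleftrightarrow> (\<exists>k<i. k < length xs \<and> x \<in> xs ! k)"
proof -
  have "x \<in> \<Union> (set (take i xs)) \<longleftrightarrow> (\<exists>k < length (take i xs). x \<in> take i xs ! k)"
    by (rule mem_Union_set)
  also have "\<dots> \<longleftrightarrow> (\<exists>k<i. k < length xs \<and> x \<in> xs ! k)"
  proof
    assume "\<exists>k < length (take i xs). x \<in> take i xs ! k"
    then obtain k where "k < length (take i xs)" "x \<in> take i xs ! k" by blast
    then show "\<exists>k<i. k < length xs \<and> x \<in> xs ! k"
      by (intro exI[of _ k]) (simp add: nth_take)
  next
    assume "\<exists>k<i. k < length xs \<and> x \<in> xs ! k"
    then obtain k where "k < i" "k < length xs" "x \<in> xs ! k" by blast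
    then show "\<exists>k < length (take i xs). x \<in> take i xs ! k"
      by (intro exI[of _ k]) (simp add: nth_take)
  qed
  finally show ?thesis .
qed

lemma complete_mono:
  assumes "\<forall>C\<in>set Cs. \<exists>D\<in>set Ds. C \<subseteq> D" "complete_in (clique_graph Cs) S"
  shows "complete_in (clique_graph Ds) S"
  unfolding complete_in_def
proof (intro ballI impI)
  fix x y assume xy: "x \<in> S" "y \<in> S" "x \<noteq> y"
  then have "clique_graph Cs x y" using assms(2) unfolding complete_in_def by blast
  then obtain C where C: "C \<in> set Cs" "x \<in> C" "y \<in> C" unfolding clique_graph_def by blast
  then obtain D where "D \<in> set Ds" "C \<subseteq> D" using assms(1) by blast
  then show "clique_graph Ds x y" unfolding clique_graph_def using C xy by blast
qed

lemma sep_append: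
  assumes "i < length Cs"
  shows "separator (Cs @ [X]) i = separator Cs i"
proof -
  have "take i (Cs @ [X]) = take i Cs" using assms by simp
  moreover have "(Cs @ [X]) ! i = Cs ! i" using assms by (simp add: nth_append)
  ultimately show ?thesis unfolding separator_def by simp
qed

lemma sep_append_last:
  "separator (Cs @ [X]) (length Cs) = X \<inter> \<Union> (set Cs)"
  by (simp add: separator_def)

lemma sep_update:
  assumes "v \<notin> \<Union> (set Cs)" "a < length Cs" "i < length Cs"
  shows "separator (Cs[a := insert v (Cs ! a)]) i = separator Cs i"
proof -
  have vn: "\<And>k. k < length Cs \<Longrightarrow> v \<notin> Cs ! k" using assms(1) mem_Union_set by metis
  show ?thesis
    unfolding separator_def
  proof (intro equalityI subsetI)
    fix x assume x: "x \<in> Cs[a := insert v (Cs ! a)] ! i \<inter> \<Union> (set (take i (Cs[a := insert v (Cs ! a)])))"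
    then obtain k where k: "k < i" "x \<in> Cs[a := insert v (Cs ! a)] ! k"
      using mem_Union_take by (metis IntD2 length_list_update)
    have xi: "x \<in> Cs[a := insert v (Cs ! a)] ! i" using x by blast
    show "x \<in> Cs ! i \<inter> \<Union> (set (take i Cs))"
    proof (cases "x = v")
      case True
      then have "i = a" using xi assms vn by (cases "i = a") auto
      then have "k \<noteq> a" using k by simp
      then have "v \<in> Cs ! k" using k True by simp
      moreover have "k < length Cs" using k assms by simp
      ultimately show ?thesis using vn by blast
    next
      case False
      then have "x \<in> Cs ! i" using xi assms by (cases "i = a") auto
      moreover have "x \<in> Cs ! k" using k False assms by (cases "k = a") auto
      moreover have "x \<in> \<Union> (set (take i Cs))" unfolding mem_Union_take using k assms(3) \<open>x \<in> Cs ! k\<close> by auto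
      ultimately show ?thesis by blast
    qed
  next
    fix x assume x: "x \<in> Cs ! i \<inter> \<Union> (set (take i Cs))"
    then obtain k where k: "k < i" "x \<in> Cs ! k" using mem_Union_take by (metis IntD2)
    have "x \<in> Cs[a := insert v (Cs ! a)] ! i" using x assms by (cases "i = a") auto
    moreover have "x \<in> Cs[a := insert v (Cs ! a)] ! k" using k assms by (cases "k = a") auto
    moreover have "x \<in> \<Union> (set (take i (Cs[a := insert v (Cs ! a)])))"
      unfolding mem_Union_take using k assms(3) \<open>x \<in> Cs[a := insert v (Cs ! a)] ! k\<close> by auto
    ultimately show "x \<in> Cs[a := insert v (Cs ! a)] ! i \<inter> \<Union> (set (take i (Cs[a := insert v (Cs ! a)])))"
      by blast
  qed
qed

lemma main:
  assumes "mfcf_reach p Cs Out"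
  shows "perfect_sequence (clique_graph Cs) Cs \<and> Out \<inter> \<Union> (set Cs) = {}"
  using assms
proof induction
  case (init Cs)
  then show ?case by auto
next
  case (step_proper Cs Out a v S)
  let ?D = "Cs @ [insert v S]"
  have vn: "v \<notin> \<Union> (set Cs)" using step_proper by blast
  have sub: "\<forall>C\<in>set Cs. \<exists>D\<in>set ?D. C \<subseteq> D" by auto
  have last: "separator ?D (length Cs) = S"
    using vn step_proper(5) nth_mem[OF step_proper(3)] by (auto simp: sep_append_last)
  have PS: "perfect_sequence (clique_graph Cs) Cs" using step_proper by blast
  have "running_intersection ?D"
    unfolding running_intersection_def
  proof (intro allI impI)
    fix i assume i: "1 \<le> i \<and> i < length ?D"
    show "\<exists>j<i. separator ?D i \<subseteq> ?D ! j"
    proof (cases "i = length Cs")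
      case True
      then show ?thesis using last step_proper(3,5) by (intro exI[of _ a]) (auto simp: nth_append)
    next
      case False
      then have "i < length Cs" using i by simp
      then obtain j where "j < i" "separator Cs i \<subseteq> Cs ! j"
        using PS i unfolding perfect_sequence_def running_intersection_def by blast
      then show ?thesis using \<open>i < length Cs\<close> sep_append[OF \<open>i < length Cs\<close>]
        by (intro exI[of _ j]) (auto simp: nth_append)
    qed
  qed
  moreover have "\<forall>i. 1 \<le> i \<and> i < length ?D \<longrightarrow> complete_in (clique_graph ?D) (separator ?D i)"
  proof (intro allI impI)
    fix i assume i: "1 \<le> i \<and> i < length ?D"
    show "complete_in (clique_graph ?D) (separator ?D i)"
    proof (cases "i = length Cs")
      case True
      have "Cs ! a \<in> set ?D" using step_proper(3) by auto
      then show ?thesis using True last step_proper(5)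
        unfolding complete_in_def clique_graph_def by blast
    next
      case False
      then have "i < length Cs" using i by simp
      then have "complete_in (clique_graph Cs) (separator Cs i)"
        using PS i unfolding perfect_sequence_def by blast
      then show ?thesis using complete_mono[OF sub] sep_append[OF \<open>i < length Cs\<close>] by metis
    qed
  qed
  moreover have "(Out - {v}) \<inter> \<Union> (set ?D) = {}"
    using step_proper(4,5,8) nth_mem[OF step_proper(3)] by auto
  ultimately show ?case unfolding perfect_sequence_def by blast
next
  case (step_full Cs Out a v)
  let ?D = "Cs[a := insert v (Cs ! a)]"
  have vn: "v \<notin> \<Union> (set Cs)" using step_full by blast
  have len: "length ?D = length Cs" by simp
  have sub: "\<forall>C\<in>set Cs. \<exists>D\<in>set ?D. C \<subseteq> D"
  proof
    fix C assume "C \<in> set Cs"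
    then obtain k where k: "k < length Cs" "C = Cs ! k" by (auto simp: in_set_conv_nth)
    then have "C \<subseteq> ?D ! k" by (cases "k = a") auto
    moreover have "?D ! k \<in> set ?D" using k by simp
    ultimately show "\<exists>D\<in>set ?D. C \<subseteq> D" by blast
  qed
  have PS: "perfect_sequence (clique_graph Cs) Cs" using step_full by blast
  have "running_intersection ?D"
    unfolding running_intersection_def
  proof (intro allI impI)
    fix i assume i: "1 \<le> i \<and> i < length ?D"
    then obtain j where j: "j < i" "separator Cs i \<subseteq> Cs ! j"
      using PS unfolding perfect_sequence_def running_intersection_def by auto
    have "Cs ! j \<subseteq> ?D ! j" using j i by (cases "j = a") auto
    then show "\<exists>j<i. separator ?D i \<subseteq> ?D ! j"
      using j sep_update[OF vn step_full(3)] i by (intro exI[of _ j]) auto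
  qed
  moreover have "\<forall>i. 1 \<le> i \<and> i < length ?D \<longrightarrow> complete_in (clique_graph ?D) (separator ?D i)"
    using PS complete_mono[OF sub] sep_update[OF vn step_full(3)]
    unfolding perfect_sequence_def by auto
  moreover have "(Out - {v}) \<inter> \<Union> (set ?D) = {}"
  proof -
    have "\<Union> (set ?D) \<subseteq> insert v (\<Union> (set Cs))"
      using set_update_subset_insert[of Cs a "insert v (Cs ! a)"] nth_mem[OF step_full(3)] by blast
    then show ?thesis using step_full(5) by blast
  qed
  ultimately show ?case unfolding perfect_sequence_def by blast
next
  case (step_empty Cs Out a v)
  let ?D = "Cs @ [{v}]"
  have vn: "v \<notin> \<Union> (set Cs)" using step_empty by blast
  have sub: "\<forall>C\<in>set Cs. \<exists>D\<in>set ?D. C \<subseteq> D" by auto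
  have last: "separator ?D (length Cs) = {}"
    using vn by (auto simp: sep_append_last)
  have PS: "perfect_sequence (clique_graph Cs) Cs" using step_empty by blast
  have "running_intersection ?D"
    unfolding running_intersection_def
  proof (intro allI impI)
    fix i assume i: "1 \<le> i \<and> i < length ?D"
    show "\<exists>j<i. separator ?D i \<subseteq> ?D ! j"
    proof (cases "i = length Cs")
      case True
      then show ?thesis using last i by (intro exI[of _ 0]) auto
    next
      case False
      then have "i < length Cs" using i by simp
      then obtain j where "j < i" "separator Cs i \<subseteq> Cs ! j"
        using PS i unfolding perfect_sequence_def running_intersection_def by blast
      then show ?thesis using \<open>i < length Cs\<close> sep_append[OF \<open>i < length Cs\<close>]
        by (intro exI[of _ j]) (auto simp: nth_append)
    qed
  qed
  moreover have "\<forall>i. 1 \<le> i \<and> i < length ?D \<longrightarrow> complete_in (clique_graph ?D) (separator ?D i)"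
  proof (intro allI impI)
    fix i assume i: "1 \<le> i \<and> i < length ?D"
    show "complete_in (clique_graph ?D) (separator ?D i)"
    proof (cases "i = length Cs")
      case True
      then show ?thesis using last unfolding complete_in_def by simp
    next
      case False
      then have "i < length Cs" using i by simp
      then have "complete_in (clique_graph Cs) (separator Cs i)"
        using PS i unfolding perfect_sequence_def by blast
      then show ?thesis using complete_mono[OF sub] sep_append[OF \<open>i < length Cs\<close>] by metis
    qed
  qed
  moreover have "(Out - {v}) \<inter> \<Union> (set ?D) = {}" using step_empty by auto
  ultimately show ?case unfolding perfect_sequence_def by blast
qed

theorem theorem13:
  fixes p :: nat and Cs :: "nat set list" and Out :: "nat set"
  assumes "mfcf_reach p Cs Out"
  shows "perfect_sequence (clique_graph Cs) Cs"
  using main[OF assms] by blast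

end
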